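(* Let $q$ be an odd prime power, let $a,b\in\mathbb{F}_q$ with $b\ne0$, and let $n\ge2$ be an integer with $\gcd(n+1,q)=1$. Then $\hat C_n(a,b)$ is LCD if and only if $$a/b\notin\{-\mu/b+\theta^i+\theta^{-i} : 1\le i\le n\}\cup\{\mu/b+\theta^i+\theta^{-i} : 1\le i\le n\},$$ where $\mu\in\mathbb{F}_{q^2}$ satisfies $\mu^2=-1$ and $\theta\in\overline{\mathbb{F}}_q$ is a primitive $2(n+1)$-th root of unity.
   Context: For $a,b\in\mathbb{F}_q$ and $n\ge 2$, $\hat T_n(a,b)$ denotes the $n\times n$ symmetric tridiagonal Toeplitz matrix over $\mathbb{F}_q$ with all diagonal entries equal to $a$, all entries on the first super- and sub-diagonals equal to $b$, and all other entries $0$. $\hat C_n(a,b)$ is the $[2n,n]$ linear code over $\mathbb{F}_q$ with generator matrix $[I_n\mid \hat T_n(a,b)]$. A linear code $C$ is LCD if $C\cap C^\perp=\{0\}$ (Euclidean dual). *)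

theory Defs
  imports Main "HOL-Library.Cardinality"
begin

text \<open>Vectors of length m over a field are modelled as functions nat \<Rightarrow> 'a
  vanishing outside the index range {0..<m}.\<close>

definition vecs :: "nat \<Rightarrow> (nat \<Rightarrow> 'a::zero) set" where
  "vecs m = {v. \<forall>i\<ge>m. v i = 0}"

definition tridiag_toeplitz :: "nat \<Rightarrow> 'a::zero \<Rightarrow> 'a \<Rightarrow> nat \<Rightarrow> nat \<Rightarrow> 'a" where
  "tridiag_toeplitz n a b i j =
     (if i < n \<and> j < n then
        (if i = j then a else if i = j + 1 \<or> j = i + 1 then b else 0)
      else 0)"

definition gen_matrix :: "nat \<Rightarrow> 'a::{zero,one} \<Rightarrow> 'a \<Rightarrow> nat \<Rightarrow> nat \<Rightarrow> 'a" where
  "gen_matrix n a b i j =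
     (if i < n \<and> j < 2 * n then
        (if j < n then (if i = j then 1 else 0) else tridiag_toeplitz n a b i (j - n))
      else 0)"

definition row_code :: "nat \<Rightarrow> nat \<Rightarrow> (nat \<Rightarrow> nat \<Rightarrow> 'a::comm_ring_1) \<Rightarrow> (nat \<Rightarrow> 'a) set" where
  "row_code k m G = {(\<lambda>j. if j < m then (\<Sum>i<k. u i * G i j) else 0) | u. u \<in> vecs k}"

definition tt_code :: "nat \<Rightarrow> 'a::comm_ring_1 \<Rightarrow> 'a \<Rightarrow> (nat \<Rightarrow> 'a) set" where
  "tt_code n a b = row_code n (2 * n) (gen_matrix n a b)"

definition euclid_dual :: "nat \<Rightarrow> (nat \<Rightarrow> 'a::comm_ring_1) set \<Rightarrow> (nat \<Rightarrow> 'a) set" where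
  "euclid_dual m C = {v \<in> vecs m. \<forall>c\<in>C. (\<Sum>j<m. v j * c j) = 0}"

definition is_LCD :: "nat \<Rightarrow> (nat \<Rightarrow> 'a::comm_ring_1) set \<Rightarrow> bool" where
  "is_LCD m C \<longleftrightarrow> C \<inter> euclid_dual m C = {(\<lambda>_. 0)}"

definition field_embedding :: "('a::field \<Rightarrow> 'b::field) \<Rightarrow> bool" where
  "field_embedding \<phi> \<longleftrightarrow> (\<forall>x y. \<phi> (x + y) = \<phi> x + \<phi> y) \<and> (\<forall>x y. \<phi> (x * y) = \<phi> x * \<phi> y) \<and> \<phi> 1 = 1"

definition primitive_root_of_unity :: "nat \<Rightarrow> 'a::field \<Rightarrow> bool" where
  "primitive_root_of_unity k \<theta> \<longleftrightarrow> \<theta> ^ k = 1 \<and> (\<forall>j. 0 < j \<and> j < k \<longrightarrow> \<theta> ^ j \<noteq> 1)"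

end

theory Submission
  imports Defs "HOL-Computational_Algebra.Polynomial"
begin

definition tmul :: "nat \<Rightarrow> 'a::comm_ring_1 \<Rightarrow> 'a \<Rightarrow> (nat \<Rightarrow> 'a) \<Rightarrow> nat \<Rightarrow> 'a" where
  "tmul n a b u k = (\<Sum>j<n. tridiag_toeplitz n a b k j * u j)"

lemma tt_sym: "tridiag_toeplitz n a b i j = tridiag_toeplitz n a b j i"
  unfolding tridiag_toeplitz_def by auto

lemma tmul_ge: "k \<ge> n \<Longrightarrow> tmul n a b u k = 0"
  unfolding tmul_def tridiag_toeplitz_def by auto

lemma tmul_vecs: "tmul n a b u \<in> vecs n"
  unfolding vecs_def using tmul_ge by auto

lemma tmul_eq:
  assumes u: "u \<in> vecs n" and k: "k < n"
  shows "tmul n a b u k = a * u k + b * u (Suc k) + (if k = 0 then 0 else b * u (k - 1))"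
proof -
  have "tmul n a b u k = (\<Sum>j<n. (if j = k then a * u j else 0) + (if j = Suc k then b * u j else 0)
      + (if j = k - 1 \<and> k > 0 then b * u j else 0))"
    unfolding tmul_def
    by (rule sum.cong) (use k in \<open>auto simp: tridiag_toeplitz_def\<close>)
  also have "\<dots> = a * u k + (if Suc k < n then b * u (Suc k) else 0) + (if k > 0 then b * u (k - 1) else 0)"
    using k by (simp add: sum.distrib sum.delta)
  also have "\<dots> = a * u k + b * u (Suc k) + (if k = 0 then 0 else b * u (k - 1))"
    using u unfolding vecs_def by auto
  finally show ?thesis .
qed

lemma tmul_symm: "(\<Sum>j<n. tmul n a b x j * y j) = (\<Sum>j<n. x j * tmul n a b y j)"
proof -
  have "(\<Sum>j<n. tmul n a b x j * y j) = (\<Sum>j<n. \<Sum>i<n. tridiag_toeplitz n a b j i * x i * y j)"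
    unfolding tmul_def by (simp add: sum_distrib_right)
  also have "\<dots> = (\<Sum>i<n. \<Sum>j<n. tridiag_toeplitz n a b j i * x i * y j)"
    by (rule sum.swap)
  also have "\<dots> = (\<Sum>i<n. x i * tmul n a b y i)"
    unfolding tmul_def by (simp add: sum_distrib_left tt_sym mult_ac)
  finally show ?thesis .
qed

definition cw :: "nat \<Rightarrow> 'a::comm_ring_1 \<Rightarrow> 'a \<Rightarrow> (nat \<Rightarrow> 'a) \<Rightarrow> nat \<Rightarrow> 'a" where
  "cw n a b u j = (if j < n then u j else if j < 2 * n then tmul n a b u (j - n) else 0)"

lemma tt_code_eq: "tt_code n a b = cw n a b ` vecs n"
proof -
  have "(\<lambda>j. if j < 2 * n then (\<Sum>i<n. u i * gen_matrix n a b i j) else 0) = cw n a b u" for u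
  proof
    fix j
    show "(if j < 2 * n then (\<Sum>i<n. u i * gen_matrix n a b i j) else 0) = cw n a b u j"
    proof (cases "j < n")
      case True
      then show ?thesis unfolding cw_def gen_matrix_def
        by (simp add: if_distrib[of "\<lambda>x. _ * x"] sum.delta cong: if_cong)
    next
      case False
      then show ?thesis unfolding cw_def gen_matrix_def tmul_def
        by (auto intro!: sum.cong simp: tt_sym mult.commute)
    qed
  qed
  then show ?thesis unfolding tt_code_def row_code_def by auto
qed

lemma cw_vecs: "u \<in> vecs n \<Longrightarrow> cw n a b u \<in> vecs (2*n)"
  unfolding vecs_def cw_def by auto

lemma cw_zero_iff: "u \<in> vecs n \<Longrightarrow> cw n a b u = (\<lambda>_. 0) \<longleftrightarrow> u = (\<lambda>_. 0)"
proof
  assume u: "u \<in> vecs n" and c: "cw n a b u = (\<lambda>_. 0)"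
  show "u = (\<lambda>_. 0)"
  proof
    fix j show "u j = 0"
      using fun_cong[OF c, of j] u unfolding cw_def vecs_def by (cases "j < n") auto
  qed
next
  assume "u = (\<lambda>_. 0)"
  then show "cw n a b u = (\<lambda>_. 0)" unfolding cw_def tmul_def by auto
qed

lemma cw_inner:
  assumes "u \<in> vecs n" "v \<in> vecs n"
  shows "(\<Sum>j<2*n. cw n a b u j * cw n a b v j) = (\<Sum>j<n. (u j + tmul n a b (tmul n a b u) j) * v j)"
proof -
  have split: "{..<2*n} = {..<n} \<union> {n..<2*n}" by auto
  have "(\<Sum>j<2*n. cw n a b u j * cw n a b v j) = (\<Sum>j<n. cw n a b u j * cw n a b v j) + (\<Sum>j\<in>{n..<2*n}. cw n a b u j * cw n a b v j)"
    unfolding split by (rule sum.union_disjoint) auto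
  also have "(\<Sum>j<n. cw n a b u j * cw n a b v j) = (\<Sum>j<n. u j * v j)"
    unfolding cw_def by simp
  also have "(\<Sum>j\<in>{n..<2*n}. cw n a b u j * cw n a b v j) = (\<Sum>j\<in>{0+n..<n+n}. tmul n a b u (j - n) * tmul n a b v (j - n))"
    unfolding cw_def by (intro sum.cong) auto
  also have "\<dots> = (\<Sum>j<n. tmul n a b u j * tmul n a b v j)"
    unfolding sum.shift_bounds_nat_ivl by (simp add: lessThan_atLeast0)
  also have "\<dots> = (\<Sum>j<n. tmul n a b (tmul n a b u) j * v j)"
    by (rule tmul_symm[symmetric])
  finally show ?thesis by (simp add: sum.distrib distrib_right)
qed

lemma all_inner_zero:
  fixes g :: "nat \<Rightarrow> 'a::comm_ring_1"
  shows "(\<forall>v\<in>vecs n. (\<Sum>j<n. g j * v j) = 0) \<longleftrightarrow> (\<forall>k<n. g k = 0)"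
proof
  assume h: "\<forall>v\<in>vecs n. (\<Sum>j<n. g j * v j) = 0"
  show "\<forall>k<n. g k = 0"
  proof (intro allI impI)
    fix k assume k: "k < n"
    have "(\<lambda>j. if j = k then 1 else 0) \<in> vecs n" using k unfolding vecs_def by auto
    from h[rule_format, OF this] show "g k = 0" using k
      by (simp add: if_distrib[of "\<lambda>x. _ * x"] sum.delta cong: if_cong)
  qed
qed simp

lemma lcd_iff:
  "is_LCD (2*n) (tt_code n a b) \<longleftrightarrow>
     (\<forall>u\<in>vecs n. (\<forall>k<n. u k + tmul n a b (tmul n a b u) k = 0) \<longrightarrow> u = (\<lambda>_. 0))"
proof -
  have zin: "(\<lambda>_. 0) \<in> vecs n" unfolding vecs_def by auto
  have mem: "cw n a b u \<in> euclid_dual (2*n) (tt_code n a b) \<longleftrightarrow> (\<forall>k<n. u k + tmul n a b (tmul n a b u) k = 0)"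
    if u: "u \<in> vecs n" for u
  proof -
    have "cw n a b u \<in> euclid_dual (2*n) (tt_code n a b) \<longleftrightarrow>
       (\<forall>v\<in>vecs n. (\<Sum>j<n. (u j + tmul n a b (tmul n a b u) j) * v j) = 0)"
      unfolding euclid_dual_def tt_code_eq using cw_vecs[OF u] cw_inner[OF u] by auto
    then show ?thesis using all_inner_zero by auto
  qed
  have z0: "cw n a b (\<lambda>_. 0) = (\<lambda>_. 0)" using cw_zero_iff[OF zin] by simp
  have "is_LCD (2*n) (tt_code n a b) \<longleftrightarrow> (\<forall>c\<in>tt_code n a b. c \<in> euclid_dual (2*n) (tt_code n a b) \<longrightarrow> c = (\<lambda>_. 0))"
  proof -
    have "(\<lambda>_. 0) \<in> tt_code n a b" unfolding tt_code_eq using zin z0 by (metis image_eqI)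
    moreover have "(\<lambda>_. 0) \<in> euclid_dual (2*n) (tt_code n a b)" unfolding euclid_dual_def vecs_def by simp
    ultimately show ?thesis unfolding is_LCD_def by blast
  qed
  also have "\<dots> \<longleftrightarrow> (\<forall>u\<in>vecs n. (\<forall>k<n. u k + tmul n a b (tmul n a b u) k = 0) \<longrightarrow> u = (\<lambda>_. 0))"
    unfolding tt_code_eq using mem[unfolded tt_code_eq] cw_zero_iff[of _ n a b] by auto
  finally show ?thesis .
qed

definition gm :: "'a::comm_ring_1 \<times> 'a \<Rightarrow> 'a \<times> 'a \<Rightarrow> 'a \<times> 'a" where
  "gm x y = (fst x * fst y - snd x * snd y, fst x * snd y + snd x * fst y)"

definition gsub :: "'a::comm_ring_1 \<times> 'a \<Rightarrow> 'a \<times> 'a \<Rightarrow> 'a \<times> 'a" where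
  "gsub x y = (fst x - fst y, snd x - snd y)"

fun E :: "'a::field \<Rightarrow> 'a \<Rightarrow> nat \<Rightarrow> 'a \<times> 'a" where
  "E a b 0 = (1, 0)"
| "E a b (Suc 0) = (-a/b, -1/b)"
| "E a b (Suc (Suc k)) = gsub (gm (-a/b, -1/b) (E a b (Suc k))) (E a b k)"

lemma rec_sol:
  fixes P :: "nat \<Rightarrow> 'a::field \<times> 'a"
  assumes rec: "\<And>k. k < n \<Longrightarrow> P (Suc k) = gsub (gm (-a/b, -1/b) (P k)) (if k = 0 then (0,0) else P (k - 1))"
  shows "k \<le> n \<Longrightarrow> P k = gm (E a b k) (P 0)"
proof (induction k rule: less_induct)
  case (less k)
  show ?case
  proof (cases k)
    case 0 then show ?thesis by (simp add: gm_def)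
  next
    case (Suc m)
    show ?thesis
    proof (cases m)
      case 0
      then show ?thesis using rec[of 0] Suc less.prems by (simp add: gm_def gsub_def)
    next
      case (Suc l)
      have "P k = gsub (gm (-a/b, -1/b) (P (Suc l))) (P l)"
        using rec[of "Suc l"] \<open>k = Suc m\<close> Suc less.prems by simp
      also have "\<dots> = gm (E a b k) (P 0)"
        using less.IH[of "Suc l"] less.IH[of l] \<open>k = Suc m\<close> Suc less.prems
        by (simp add: gm_def gsub_def algebra_simps)
      finally show ?thesis .
    qed
  qed
qed

lemma gm_zero_norm:
  fixes x y :: "'a::field \<times> 'a"
  assumes "gm x y = (0,0)" "y \<noteq> (0,0)"
  shows "fst x ^ 2 + snd x ^ 2 = 0"
proof -
  obtain p q s t where x: "x = (p,q)" and y: "y = (s,t)" by (cases x, cases y)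
  have e1: "p*s - q*t = 0" and e2: "p*t + q*s = 0" using assms(1) by (auto simp: gm_def x y)
  have "(p^2+q^2)*s = p*(p*s - q*t) + q*(p*t+q*s)" by (simp add: algebra_simps power2_eq_square)
  then have 1: "(p^2+q^2)*s = 0" using e1 e2 by simp
  have "(p^2+q^2)*t = p*(p*t+q*s) - q*(p*s - q*t)" by (simp add: algebra_simps power2_eq_square)
  then have 2: "(p^2+q^2)*t = 0" using e1 e2 by simp
  show ?thesis using 1 2 assms(2) by (auto simp: x y)
qed

lemma kernel_imp:
  fixes a b :: "'a::field"
  assumes u: "u \<in> vecs n" and b: "b \<noteq> 0" and n: "n \<ge> 1"
    and ker: "\<forall>k<n. u k + tmul n a b (tmul n a b u) k = 0" and nz: "u \<noteq> (\<lambda>_. 0)"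
  shows "fst (E a b n) ^ 2 + snd (E a b n) ^ 2 = 0"
proof -
  define w where "w = tmul n a b u"
  have w: "w \<in> vecs n" unfolding w_def by (rule tmul_vecs)
  define P where "P k = (u k, w k)" for k
  have rec: "P (Suc k) = gsub (gm (-a/b, -1/b) (P k)) (if k = 0 then (0,0) else P (k - 1))" if k: "k < n" for k
  proof -
    have e1: "w k = a * u k + b * u (Suc k) + (if k = 0 then 0 else b * u (k - 1))"
      unfolding w_def using tmul_eq[OF u k] .
    have e2: "- u k = a * w k + b * w (Suc k) + (if k = 0 then 0 else b * w (k - 1))"
    proof -
      have "u k + tmul n a b w k = 0" using ker k unfolding w_def by simp
      then have "- u k = tmul n a b w k" by (metis add.commute add_eq_0_iff)
      then show ?thesis using tmul_eq[OF w k, of a b] by simp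
    qed
    show ?thesis using e1 e2 b unfolding P_def gm_def gsub_def
      by (cases "k = 0") (auto simp: field_simps)
  qed
  have sol: "P k = gm (E a b k) (P 0)" if "k \<le> n" for k
    using rec_sol[of n P a b, OF rec] that by blast
  have Pn: "P n = (0,0)" using u w unfolding P_def vecs_def by auto
  have P0: "P 0 \<noteq> (0,0)"
  proof
    assume "P 0 = (0,0)"
    then have "P k = (0,0)" if "k \<le> n" for k using sol[OF that] by (simp add: gm_def)
    then have "u k = 0" for k using u unfolding P_def vecs_def by (cases "k \<le> n") auto
    then show False using nz by auto
  qed
  show ?thesis using gm_zero_norm[of "E a b n" "P 0"] sol[of n] Pn P0 by simp
qed

lemma kernel_conv:
  fixes a b :: "'a::field"
  assumes b: "b \<noteq> 0" and n: "n \<ge> 1"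
    and N: "fst (E a b n) ^ 2 + snd (E a b n) ^ 2 = 0"
  shows "\<exists>u\<in>vecs n. (\<forall>k<n. u k + tmul n a b (tmul n a b u) k = 0) \<and> u \<noteq> (\<lambda>_. 0)"
proof -
  obtain al be where Ea: "E a b n = (al, be)" by (cases "E a b n")
  define P0 where "P0 = (if (al, be) = (0,0) then (1,0) else (be, al))"
  have P0nz: "P0 \<noteq> (0,0)" unfolding P0_def by auto
  have P0k: "gm (E a b n) P0 = (0,0)"
    using N unfolding P0_def Ea gm_def by (auto simp: power2_eq_square mult.commute)
  define P where "P k = gm (E a b k) P0" for k
  have rec: "P (Suc k) = gsub (gm (-a/b, -1/b) (P k)) (if k = 0 then (0,0) else P (k - 1))" for k
  proof (cases k)
    case 0 then show ?thesis unfolding P_def by (simp add: gm_def gsub_def)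
  next
    case (Suc m) then show ?thesis unfolding P_def by (simp add: gm_def gsub_def algebra_simps)
  qed
  have Pn: "P n = (0,0)" unfolding P_def using P0k .
  define u where "u k = (if k < n then fst (P k) else 0)" for k
  define w where "w k = (if k < n then snd (P k) else 0)" for k
  have u: "u \<in> vecs n" and w: "w \<in> vecs n" unfolding vecs_def u_def w_def by auto
  have uS: "u (Suc k) = fst (P (Suc k))" "w (Suc k) = snd (P (Suc k))" if "k < n" for k
  proof -
    have "Suc k < n \<or> Suc k = n" using that by auto
    then show "u (Suc k) = fst (P (Suc k))" "w (Suc k) = snd (P (Suc k))"
      using Pn unfolding u_def w_def by auto
  qed
  have uP: "u (k - 1) = fst (P (k - 1))" "w (k - 1) = snd (P (k - 1))" "u k = fst (P k)" "w k = snd (P k)"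
    if "k < n" for k using that unfolding u_def w_def by auto
  have tu: "tmul n a b u = w"
  proof
    fix k show "tmul n a b u k = w k"
    proof (cases "k < n")
      case True
      have r: "P (Suc k) = gsub (gm (-a/b, -1/b) (P k)) (if k = 0 then (0,0) else P (k - 1))" by (rule rec)
      show ?thesis using r b unfolding tmul_eq[OF u True] uS[OF True] uP[OF True]
        by (cases "P k", cases "P (k-1)") (auto simp: gm_def gsub_def field_simps)
    next
      case False then show ?thesis using tmul_ge[of n k a b u] unfolding w_def by simp
    qed
  qed
  have tw: "tmul n a b w k = - u k" if k: "k < n" for k
  proof -
    have r: "P (Suc k) = gsub (gm (-a/b, -1/b) (P k)) (if k = 0 then (0,0) else P (k - 1))" by (rule rec)
    show ?thesis using r b unfolding tmul_eq[OF w k] uS[OF k] uP[OF k]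
      by (cases "P k", cases "P (k-1)") (auto simp: gm_def gsub_def field_simps)
  qed
  have nz: "u \<noteq> (\<lambda>_. 0)"
  proof
    assume u0: "u = (\<lambda>_. 0)"
    then have "w = (\<lambda>_. 0)" using tu unfolding tmul_def by auto
    then have "P 0 = (0,0)" using u0 n unfolding u_def w_def by (metis fun_cong not_one_le_zero not_gr_zero prod.collapse)
    moreover have "P 0 = P0" unfolding P_def by (simp add: gm_def)
    ultimately show False using P0nz by simp
  qed
  have "\<forall>k<n. u k + tmul n a b (tmul n a b u) k = 0" using tw tu by simp
  then show ?thesis using u nz by blast
qed

lemma emb_facts:
  assumes emb: "field_embedding (\<phi> :: 'a::field \<Rightarrow> 'b::field)"
  shows "\<phi> 0 = 0" "\<phi> (-x) = - \<phi> x" "\<phi> (x - y) = \<phi> x - \<phi> y" "\<phi> (x + y) = \<phi> x + \<phi> y"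
    "\<phi> (x * y) = \<phi> x * \<phi> y" "\<phi> 1 = 1"
    "\<phi> (inverse x) = inverse (\<phi> x)" "\<phi> (x / y) = \<phi> x / \<phi> y"
    "\<phi> x = 0 \<longleftrightarrow> x = 0" "\<phi> (x ^ 2) = \<phi> x ^ 2"
proof -
  have add: "\<And>x y. \<phi> (x + y) = \<phi> x + \<phi> y" and mul: "\<And>x y. \<phi> (x * y) = \<phi> x * \<phi> y"
    and one: "\<phi> 1 = 1" using emb unfolding field_embedding_def by auto
  show z: "\<phi> 0 = 0" using add[of 0 0] by (metis add.right_neutral add_left_cancel)
  show ng: "\<phi> (-x) = - \<phi> x" for x using add[of x "-x"] z by (simp add: eq_neg_iff_add_eq_0 add.commute)
  show "\<phi> (x - y) = \<phi> x - \<phi> y" using add[of x "-y"] ng[of y] by simp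
  show "\<phi> (x + y) = \<phi> x + \<phi> y" by (rule add)
  show "\<phi> (x * y) = \<phi> x * \<phi> y" by (rule mul)
  show "\<phi> 1 = 1" by (rule one)
  show inv: "\<phi> (inverse x) = inverse (\<phi> x)" for x
  proof (cases "x = 0")
    case True then show ?thesis using z by simp
  next
    case False
    then have "\<phi> x * \<phi> (inverse x) = 1" using mul[of x "inverse x"] one by simp
    then show ?thesis by (metis inverse_unique)
  qed
  show "\<phi> (x / y) = \<phi> x / \<phi> y" by (simp add: divide_inverse mul inv)
  show "\<phi> x = 0 \<longleftrightarrow> x = 0"
  proof
    assume h: "\<phi> x = 0"
    show "x = 0"
    proof (rule ccontr)
      assume "x \<noteq> 0"
      then have "\<phi> x * \<phi> (inverse x) = 1" using mul[of x "inverse x"] one by simp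
      then show False using h by simp
    qed
  qed (simp add: z)
  show "\<phi> (x ^ 2) = \<phi> x ^ 2" by (simp add: power2_eq_square mul)
qed

fun Ch :: "'b::field \<Rightarrow> nat \<Rightarrow> 'b" where
  "Ch x 0 = 1"
| "Ch x (Suc 0) = x"
| "Ch x (Suc (Suc k)) = x * Ch x (Suc k) - Ch x k"

lemma hom_E:
  fixes a b :: "'a::field" and \<phi> :: "'a \<Rightarrow> 'b::field"
  assumes emb: "field_embedding \<phi>" and m: "m ^ 2 = -1"
  shows "\<phi> (fst (E a b k)) + m * \<phi> (snd (E a b k)) = Ch ((- \<phi> a - m) / \<phi> b) k"
proof (induction a b k rule: E.induct)
  case (1 a b) then show ?case using emb_facts[OF emb] by simp
next
  case (2 a b) then show ?case by (cases "b = 0") (simp_all add: emb_facts[OF emb] field_simps)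
next
  case (3 a b k)
  have mm: "m * m = -1" using m by (simp add: power2_eq_square)
  obtain p q where pq: "E a b (Suc k) = (p, q)" by (cases "E a b (Suc k)")
  obtain r t where rt: "E a b k = (r, t)" by (cases "E a b k")
  show ?case
  proof (cases "b = 0")
    case True
    have e: "- \<phi> r - m * \<phi> t = - (\<phi> r + m * \<phi> t)" by simp
    show ?thesis using 3 True e unfolding E.simps Ch.simps gm_def gsub_def pq rt
      by (simp add: emb_facts[OF emb])
  next
    case False
    then have pb: "\<phi> b \<noteq> 0" using emb_facts(9)[OF emb] by blast
    have mmx: "m * (m * x) = - x" for x by (metis mm mult.assoc mult_minus1)
    then show ?thesis using 3[symmetric] mm mmx pb unfolding E.simps Ch.simps gm_def gsub_def pq rt
      by (simp add: emb_facts[OF emb] field_simps mmx)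
  qed
qed

fun Cp :: "nat \<Rightarrow> 'b::field poly" where
  "Cp 0 = 1"
| "Cp (Suc 0) = [:0, 1:]"
| "Cp (Suc (Suc k)) = pCons 0 (Cp (Suc k)) - Cp k"

lemma poly_Cp: "poly (Cp k) x = Ch x k"
  by (induction k rule: Cp.induct) auto

lemma deg_Cp: "degree (Cp k :: 'b::field poly) = k \<and> (Cp k :: 'b poly) \<noteq> 0"
proof (induction k rule: Cp.induct)
  case (3 k)
  have a1: "degree (Cp (Suc k) :: 'b poly) = Suc k" "(Cp (Suc k) :: 'b poly) \<noteq> 0" using 3 by auto
  have d1: "degree (pCons 0 (Cp (Suc k) :: 'b poly)) = Suc (Suc k)" using a1 by simp
  have "degree (pCons 0 (Cp (Suc k)) - (Cp k :: 'b poly)) = Suc (Suc k)"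
    using d1 3 degree_add_eq_left[of "- (Cp k :: 'b poly)" "pCons 0 (Cp (Suc k))"] by simp
  then have dd: "degree (Cp (Suc (Suc k)) :: 'b poly) = Suc (Suc k)" by simp
  moreover have "(Cp (Suc (Suc k)) :: 'b poly) \<noteq> 0"
  proof
    assume "(Cp (Suc (Suc k)) :: 'b poly) = 0"
    then show False using dd by simp
  qed
  ultimately show ?case by blast
qed auto

lemma alg_aux:
  fixes y i A B :: "'b::field"
  assumes "y * i = 1"
  shows "(y + i) * (y * y * A - i * i * B) - (y * A - i * B) = y * y * y * A - i * i * i * B"
proof -
  have "(y + i) * (y * y * A - i * i * B) - (y * A - i * B) - (y * y * y * A - i * i * i * B) = (y * i - 1) * (y * A - i * B)"
    by (simp add: algebra_simps)
  then show ?thesis using assms by simp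
qed

lemma Ch_closed:
  fixes y :: "'b::field"
  assumes y: "y \<noteq> 0"
  shows "Ch (y + inverse y) k * (y - inverse y) = y ^ Suc k - inverse y ^ Suc k"
proof (induction k rule: less_induct)
  case (less k)
  define i where "i = inverse y"
  have yi: "y * i = 1" unfolding i_def using y by simp
  show ?case
  proof (cases k)
    case 0 then show ?thesis by simp
  next
    case (Suc m)
    show ?thesis
    proof (cases m)
      case 0
      have "(y + i) * (y - i) = y^2 - i^2" by (simp add: algebra_simps power2_eq_square)
      then show ?thesis using \<open>k = Suc m\<close> 0 unfolding i_def by (simp add: power2_eq_square)
    next
      case (Suc l)
      have IH1: "Ch (y + i) (Suc l) * (y - i) = y ^ Suc (Suc l) - i ^ Suc (Suc l)"
        using less.IH[of "Suc l"] \<open>k = Suc m\<close> Suc unfolding i_def by simp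
      have IH2: "Ch (y + i) l * (y - i) = y ^ Suc l - i ^ Suc l"
        using less.IH[of l] \<open>k = Suc m\<close> Suc unfolding i_def by simp
      have "Ch (y + i) k * (y - i) = (y + i) * (Ch (y + i) (Suc l) * (y - i)) - Ch (y + i) l * (y - i)"
        using \<open>k = Suc m\<close> Suc by (simp add: algebra_simps)
      also have "\<dots> = (y + i) * (y * y * y ^ l - i * i * i ^ l) - (y * y ^ l - i * i ^ l)"
        unfolding IH1 IH2 by simp
      also have "\<dots> = y * y * y * y ^ l - i * i * i * i ^ l"
        using alg_aux[OF yi] .
      finally show ?thesis using \<open>k = Suc m\<close> Suc unfolding i_def by (simp add: mult_ac)
    qed
  qed
qed

lemma theta_facts:
  fixes \<theta> :: "'b::field"
  assumes th: "primitive_root_of_unity (2 * (n + 1)) \<theta>"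
  shows "\<theta> \<noteq> 0" "\<theta> ^ (n + 1) = -1" "\<And>j. 0 < j \<Longrightarrow> j < 2 * (n + 1) \<Longrightarrow> \<theta> ^ j \<noteq> 1"
proof -
  have p: "\<theta> ^ (2 * (n + 1)) = 1" and q: "\<And>j. 0 < j \<Longrightarrow> j < 2 * (n + 1) \<Longrightarrow> \<theta> ^ j \<noteq> 1"
    using th unfolding primitive_root_of_unity_def by auto
  show "\<And>j. 0 < j \<Longrightarrow> j < 2 * (n + 1) \<Longrightarrow> \<theta> ^ j \<noteq> 1" by (rule q)
  show "\<theta> \<noteq> 0" using p by (intro notI) simp
  have "(\<theta> ^ (n + 1)) ^ 2 = 1" using p by (metis power_mult mult.commute)
  then have "\<theta> ^ (n + 1) = 1 \<or> \<theta> ^ (n + 1) = -1" by (simp add: power2_eq_1_iff)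
  moreover have "\<theta> ^ (n + 1) \<noteq> 1" using q[of "n+1"] by simp
  ultimately show "\<theta> ^ (n + 1) = -1" by simp
qed

lemma root_is_root:
  fixes \<theta> :: "'b::field"
  assumes th: "primitive_root_of_unity (2 * (n + 1)) \<theta>" and i: "1 \<le> i" "i \<le> n"
  shows "Ch (\<theta> ^ i + inverse (\<theta> ^ i)) n = 0"
proof -
  note tf = theta_facts[OF th]
  define y where "y = \<theta> ^ i"
  have y0: "y \<noteq> 0" unfolding y_def using tf(1) by simp
  have yn: "y ^ Suc n = (-1) ^ i" unfolding y_def using tf(2)
    by (metis power_mult mult.commute Suc_eq_plus1)
  have iyn: "inverse y ^ Suc n = (-1) ^ i"
  proof -
    have "inverse y ^ Suc n = inverse (y ^ Suc n)" by (rule power_inverse)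
    also have "\<dots> = inverse (-1) ^ i" unfolding yn by (rule power_inverse[symmetric])
    also have "\<dots> = (-1) ^ i" by simp
    finally show ?thesis .
  qed
  have "y - inverse y \<noteq> 0"
  proof
    assume "y - inverse y = 0"
    then have "y = inverse y" by simp
    then have "y * y = 1" using y0 by (metis right_inverse)
    then have "\<theta> ^ (2 * i) = 1" unfolding y_def by (metis mult_2 power_add)
    then show False using tf(3)[of "2*i"] i by simp
  qed
  moreover have "Ch (y + inverse y) n * (y - inverse y) = 0"
    using Ch_closed[OF y0, of n] yn iyn by simp
  ultimately show ?thesis unfolding y_def by simp
qed

lemma roots_inj:
  fixes \<theta> :: "'b::field"
  assumes th: "primitive_root_of_unity (2 * (n + 1)) \<theta>"
    and ij: "1 \<le> i" "i < j" "j \<le> n"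
  shows "\<theta> ^ i + inverse (\<theta> ^ i) \<noteq> \<theta> ^ j + inverse (\<theta> ^ j)"
proof
  note tf = theta_facts[OF th]
  assume eq: "\<theta> ^ i + inverse (\<theta> ^ i) = \<theta> ^ j + inverse (\<theta> ^ j)"
  have t0: "\<theta> ^ i \<noteq> 0" "\<theta> ^ j \<noteq> 0" using tf(1) by auto
  have "(\<theta> ^ i - \<theta> ^ j) * (1 - inverse (\<theta> ^ i * \<theta> ^ j)) = (\<theta> ^ i + inverse (\<theta> ^ i)) - (\<theta> ^ j + inverse (\<theta> ^ j))"
    using t0 by (simp add: field_simps)
  then have "(\<theta> ^ i - \<theta> ^ j) * (1 - inverse (\<theta> ^ i * \<theta> ^ j)) = 0" using eq by simp
  moreover have "\<theta> ^ i - \<theta> ^ j \<noteq> 0"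
  proof
    assume "\<theta> ^ i - \<theta> ^ j = 0"
    moreover have "\<theta> ^ i * \<theta> ^ (j - i) = \<theta> ^ j" using ij by (metis power_add le_add_diff_inverse less_imp_le)
    ultimately have "\<theta> ^ i * 1 = \<theta> ^ i * \<theta> ^ (j - i)" by simp
    then have "\<theta> ^ (j - i) = 1" using t0 by (metis mult_left_cancel)
    then show False using tf(3)[of "j - i"] ij by simp
  qed
  moreover have "1 - inverse (\<theta> ^ i * \<theta> ^ j) \<noteq> 0"
  proof
    assume "1 - inverse (\<theta> ^ i * \<theta> ^ j) = 0"
    then have "\<theta> ^ (i + j) = 1" using t0 by (simp add: power_add field_simps)
    then show False using tf(3)[of "i + j"] ij by simp
  qed
  ultimately show False by simp
qed

lemma roots_char:
  fixes \<theta> :: "'b::field"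
  assumes th: "primitive_root_of_unity (2 * (n + 1)) \<theta>"
  shows "Ch x n = 0 \<longleftrightarrow> x \<in> {\<theta> ^ i + inverse (\<theta> ^ i) | i. 1 \<le> i \<and> i \<le> n}"
proof -
  define r where "r i = \<theta> ^ i + inverse (\<theta> ^ i)" for i
  have R: "{\<theta> ^ i + inverse (\<theta> ^ i) | i. 1 \<le> i \<and> i \<le> n} = r ` {1..n}" unfolding r_def by auto
  have inj: "inj_on r {1..n}"
  proof (rule inj_onI)
    fix i j assume "i \<in> {1..n}" "j \<in> {1..n}" "r i = r j"
    then show "i = j" using roots_inj[OF th, of i j] roots_inj[OF th, of j i] unfolding r_def
      by (cases i j rule: linorder_cases) auto
  qed
  have sub: "r ` {1..n} \<subseteq> {x. poly (Cp n) x = 0}"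
    using root_is_root[OF th] unfolding r_def poly_Cp by auto
  have dc: "degree (Cp n :: 'b poly) = n" "(Cp n :: 'b poly) \<noteq> 0" using deg_Cp by auto
  have fin: "finite {x. poly (Cp n :: 'b poly) x = 0}" using poly_roots_finite[OF dc(2)] .
  have "card {x. poly (Cp n :: 'b poly) x = 0} \<le> card (r ` {1..n})"
    using card_poly_roots_bound[OF dc(2)] dc(1) card_image[OF inj] by simp
  then have "r ` {1..n} = {x. poly (Cp n) x = 0}" using card_seteq[OF fin sub] by blast
  then show ?thesis unfolding R poly_Cp[symmetric] by blast
qed

lemma R_neg:
  fixes \<theta> :: "'b::field"
  assumes th: "primitive_root_of_unity (2 * (n + 1)) \<theta>"
    and x: "x \<in> {\<theta> ^ i + inverse (\<theta> ^ i) | i. 1 \<le> i \<and> i \<le> n}"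
  shows "- x \<in> {\<theta> ^ i + inverse (\<theta> ^ i) | i. 1 \<le> i \<and> i \<le> n}"
proof -
  note tf = theta_facts[OF th]
  obtain i where i: "1 \<le> i" "i \<le> n" and xi: "x = \<theta> ^ i + inverse (\<theta> ^ i)" using x by blast
  define j where "j = n + 1 - i"
  have j: "1 \<le> j" "j \<le> n" unfolding j_def using i by auto
  have t0: "\<theta> ^ i \<noteq> 0" "\<theta> ^ j \<noteq> 0" using tf(1) by auto
  have prod: "\<theta> ^ j * \<theta> ^ i = -1" unfolding j_def using i tf(2)
    by (metis power_add le_add_diff_inverse2 Suc_eq_plus1 le_SucI)
  have e1: "\<theta> ^ j = - inverse (\<theta> ^ i)" using prod t0 by (simp add: field_simps)
  have e2: "inverse (\<theta> ^ j) = - (\<theta> ^ i)" using prod t0 by (simp add: field_simps)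
  have "- x = \<theta> ^ j + inverse (\<theta> ^ j)" unfolding xi e1 e2 by simp
  then show ?thesis using j by blast
qed

lemma shift_mem:
  fixes c y :: "'b::field"
  shows "y \<in> {c + \<theta> ^ i + inverse (\<theta> ^ i) | i. 1 \<le> i \<and> i \<le> n} \<longleftrightarrow>
         y - c \<in> {\<theta> ^ i + inverse (\<theta> ^ i) | i. 1 \<le> i \<and> i \<le> n}"
  by (auto simp: algebra_simps)

theorem theorem2p7:
  fixes a b :: "'a::{field,finite}"
    and \<phi> :: "'a \<Rightarrow> 'b::field"
    and \<mu> \<theta> :: 'b
    and n :: nat
  assumes q_odd: "odd CARD('a)"
    and b_nz: "b \<noteq> 0"
    and n_ge: "n \<ge> 2"
    and cop: "gcd (n + 1) CARD('a) = 1"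
    and emb: "field_embedding \<phi>"
    and mu: "\<mu> ^ 2 = -1"
    and theta: "primitive_root_of_unity (2 * (n + 1)) \<theta>"
  shows "is_LCD (2 * n) (tt_code n a b) \<longleftrightarrow>
    \<phi> (a / b) \<notin> {- \<mu> / \<phi> b + \<theta> ^ i + inverse (\<theta> ^ i) | i. 1 \<le> i \<and> i \<le> n}
              \<union> {\<mu> / \<phi> b + \<theta> ^ i + inverse (\<theta> ^ i) | i. 1 \<le> i \<and> i \<le> n}"
proof -
  note ef = emb_facts[OF emb]
  define R where "R = {\<theta> ^ i + inverse (\<theta> ^ i) | i. 1 \<le> i \<and> i \<le> n}"
  have n1: "n \<ge> 1" using n_ge by simp
  have pb: "\<phi> b \<noteq> 0" using b_nz ef(9) by blast
  define N where "N = fst (E a b n) ^ 2 + snd (E a b n) ^ 2"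
  define xp where "xp = (- \<phi> a - \<mu>) / \<phi> b"
  define xm where "xm = (- \<phi> a - (- \<mu>)) / \<phi> b"
  have h1: "\<phi> (fst (E a b n)) + \<mu> * \<phi> (snd (E a b n)) = Ch xp n"
    unfolding xp_def by (rule hom_E[OF emb mu])
  have mu': "(- \<mu>) ^ 2 = -1" using mu by simp
  have h2: "\<phi> (fst (E a b n)) + (- \<mu>) * \<phi> (snd (E a b n)) = Ch xm n"
    unfolding xm_def by (rule hom_E[OF emb mu'])
  have "\<phi> N = (\<phi> (fst (E a b n)) + \<mu> * \<phi> (snd (E a b n))) * (\<phi> (fst (E a b n)) + (- \<mu>) * \<phi> (snd (E a b n)))"
  proof -
    have "\<mu> * \<mu> = -1" using mu by (simp add: power2_eq_square)
    then have mmx: "\<mu> * (\<mu> * x) = - x" for x by (metis mult.assoc mult_minus1)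
    show ?thesis unfolding N_def ef power2_eq_square by (simp add: algebra_simps mmx)
  qed
  then have phN: "\<phi> N = Ch xp n * Ch xm n" using h1 h2 by simp
  have "is_LCD (2 * n) (tt_code n a b) \<longleftrightarrow> N \<noteq> 0"
    unfolding lcd_iff N_def using kernel_imp[OF _ b_nz n1] kernel_conv[OF b_nz n1] by blast
  also have "\<dots> \<longleftrightarrow> \<not> (Ch xp n = 0 \<or> Ch xm n = 0)"
    using phN ef(9)[of N] by simp
  also have "\<dots> \<longleftrightarrow> \<not> (xp \<in> R \<or> xm \<in> R)"
    unfolding R_def using roots_char[OF theta] by simp
  also have "\<dots> \<longleftrightarrow> \<not> (- xp \<in> R \<or> - xm \<in> R)"
    using R_neg[OF theta, of xp] R_neg[OF theta, of "- xp"] R_neg[OF theta, of xm] R_neg[OF theta, of "- xm"]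
    unfolding R_def by auto
  also have "\<dots> \<longleftrightarrow> \<phi> (a / b) \<notin> {- \<mu> / \<phi> b + \<theta> ^ i + inverse (\<theta> ^ i) | i. 1 \<le> i \<and> i \<le> n}
              \<union> {\<mu> / \<phi> b + \<theta> ^ i + inverse (\<theta> ^ i) | i. 1 \<le> i \<and> i \<le> n}"
  proof -
    have e1: "\<phi> (a / b) - (- \<mu> / \<phi> b) = - xp" unfolding xp_def ef using pb by (simp add: field_simps)
    have e2: "\<phi> (a / b) - (\<mu> / \<phi> b) = - xm" unfolding xm_def ef using pb by (simp add: field_simps)
    show ?thesis unfolding Un_iff shift_mem e1 e2 R_def by simp
  qed
  finally show ?thesis .
qed

end
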